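(* Let $\alpha,\beta\in(0,1]$, and let $L(t,u,v,w):\mathbb{T}^\kappa\times\mathbb{R}^3\to\mathbb{R}$ have continuous second-order partial derivatives in $(u,v,w)$. Consider the problem $$\mathcal{L}(y)=\int_a^bL\bigl(t,y(\sigma(t)),({}_a\Delta_h^\alpha y)(t),({}_h\Delta_b^\beta y)(t)\bigr)\Delta t\to\min,\qquad y(a)=A,\ y(b)=B,$$ over $y:\mathbb{T}\to\mathbb{R}$. If $\hat y$ is a local minimizer, then for all $t\in\mathbb{T}^{\kappa^2}$, $$L_u[\hat y](t)+\bigl({}_h\Delta_{\rho(b)}^{\alpha}L_v[\hat y]\bigr)(t)+\bigl({}_a\Delta_h^{\beta}L_w[\hat y]\bigr)(t)=0,$$ where $[y](s)=(s,y(\sigma(s)),({}_a\Delta_h^\alpha y)(s),({}_h\Delta_b^\beta y)(s))$ and $L_v[\hat y]$, $L_w[\hat y]$ are the functions $s\mapsto L_v([\hat y](s))$, $s\mapsto L_w([\hat y](s))$ on $\mathbb{T}^\kappa$.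
   Context: Let $a\in\mathbb{R}$, $h>0$, $b=a+kh$ with $k\in\mathbb{N}$, $k\ge2$, $\mathbb{T}=\{a,a+h,\dots,b\}$, $\mathbb{T}^\kappa=\mathbb{T}\setminus\{b\}$, $\mathbb{T}^{\kappa^2}=\mathbb{T}\setminus\{b-h,b\}$, $\sigma(t)=t+h$, $\rho(t)=t-h$, $G^\Delta(t)=(G(t+h)-G(t))/h$; $\int_c^dG(s)\Delta s:=h\sum_{j=0}^{(d-c)/h-1}G(c+jh)$ for $c\le d$. $h$-factorial: $x_h^{(y)}:=h^y\Gamma(\frac{x}{h}+1)/\Gamma(\frac{x}{h}+1-y)$ (division at a pole yields zero). For $\nu\ge0$, $c\in\mathbb{T}$, $G$ on $\{s\in\mathbb{T}:s\le c\}$, $t\le c$: $({}_a\Delta_h^{-\nu}G)(t+\nu h):=h^\nu G(t)+\frac{\nu}{\Gamma(\nu+1)}\int_a^t(t+\nu h-\sigma(s))_h^{(\nu-1)}G(s)\Delta s$ and $({}_h\Delta_c^{-\nu}G)(t-\nu h):=h^\nu G(t)+\frac{\nu}{\Gamma(\nu+1)}\int_{\sigma(t)}^{\sigma(c)}(s+\nu h-\sigma(t))_h^{(\nu-1)}G(s)\Delta s$. For $0<\alpha\le1$, $\gamma=1-\alpha$, $t<c$: $({}_a\Delta_h^{\alpha}G)(t):=[\tau\mapsto({}_a\Delta_h^{-\gamma}G)(\tau+\gamma h)]^\Delta(t)$, $({}_h\Delta_c^{\alpha}G)(t):=-[\tau\mapsto({}_h\Delta_c^{-\gamma}G)(\tau-\gamma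 h)]^\Delta(t)$. Norm: $\|y\|=\max_{t\in\mathbb{T}^\kappa}|y(\sigma(t))|+\max_{t\in\mathbb{T}^\kappa}|({}_a\Delta_h^\alpha y)(t)|+\max_{t\in\mathbb{T}^\kappa}|({}_h\Delta_b^\beta y)(t)|$. $\hat y$ with $\hat y(a)=A$, $\hat y(b)=B$ is a local minimizer if for some $\delta>0$, $\mathcal{L}(\hat y)\le\mathcal{L}(y)$ for all $y$ with $y(a)=A$, $y(b)=B$, $\|y-\hat y\|<\delta$. *)

theory Defs
  imports "HOL-Analysis.Analysis"
begin

text \<open>Discrete time scale T = {a, a+h, ..., a+kh}, b = a + k h.\<close>

definition tscale :: "real \<Rightarrow> real \<Rightarrow> nat \<Rightarrow> real set" where
  "tscale a h k = {a + real j * h | j. j \<le> k}"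

definition tscale_k :: "real \<Rightarrow> real \<Rightarrow> nat \<Rightarrow> real set" where
  "tscale_k a h k = {a + real j * h | j. j < k}"

definition tscale_k2 :: "real \<Rightarrow> real \<Rightarrow> nat \<Rightarrow> real set" where
  "tscale_k2 a h k = {a + real j * h | j. j + 2 \<le> k}"

text \<open>h-factorial; Isabelle's Gamma is 0 at its poles and x / 0 = 0, so a pole in the
  denominator yields zero.\<close>
definition hfact :: "real \<Rightarrow> real \<Rightarrow> real \<Rightarrow> real" where
  "hfact h x y = h powr y * Gamma (x / h + 1) / Gamma (x / h + 1 - y)"

definition dint :: "real \<Rightarrow> real \<Rightarrow> real \<Rightarrow> (real \<Rightarrow> real) \<Rightarrow> real" where
  "dint h c d G = h * (\<Sum>j < nat \<lfloor>(d - c) / h\<rfloor>. G (c + real j * h))"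

text \<open>lfsum a h nu G t  =  (a Delta_h^{-nu} G)(t + nu h).\<close>
definition lfsum :: "real \<Rightarrow> real \<Rightarrow> real \<Rightarrow> (real \<Rightarrow> real) \<Rightarrow> real \<Rightarrow> real" where
  "lfsum a h \<nu> G t = h powr \<nu> * G t
     + \<nu> / Gamma (\<nu> + 1) * dint h a t (\<lambda>s. hfact h (t + \<nu> * h - (s + h)) (\<nu> - 1) * G s)"

text \<open>rfsum h c nu G t  =  (h Delta_c^{-nu} G)(t - nu h).\<close>
definition rfsum :: "real \<Rightarrow> real \<Rightarrow> real \<Rightarrow> (real \<Rightarrow> real) \<Rightarrow> real \<Rightarrow> real" where
  "rfsum h c \<nu> G t = h powr \<nu> * G t
     + \<nu> / Gamma (\<nu> + 1) * dint h (t + h) (c + h) (\<lambda>s. hfact h (s + \<nu> * h - (t + h)) (\<nu> - 1) * G s)"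

definition lfdiff :: "real \<Rightarrow> real \<Rightarrow> real \<Rightarrow> (real \<Rightarrow> real) \<Rightarrow> real \<Rightarrow> real" where
  "lfdiff a h \<alpha> G t = (lfsum a h (1 - \<alpha>) G (t + h) - lfsum a h (1 - \<alpha>) G t) / h"

definition rfdiff :: "real \<Rightarrow> real \<Rightarrow> real \<Rightarrow> (real \<Rightarrow> real) \<Rightarrow> real \<Rightarrow> real" where
  "rfdiff h c \<alpha> G t = - ((rfsum h c (1 - \<alpha>) G (t + h) - rfsum h c (1 - \<alpha>) G t) / h)"

definition ynorm :: "real \<Rightarrow> real \<Rightarrow> nat \<Rightarrow> real \<Rightarrow> real \<Rightarrow> (real \<Rightarrow> real) \<Rightarrow> real" where
  "ynorm a h k \<alpha> \<beta> y =
     Max ((\<lambda>t. \<bar>y (t + h)\<bar>) ` tscale_k a h k)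
   + Max ((\<lambda>t. \<bar>lfdiff a h \<alpha> y t\<bar>) ` tscale_k a h k)
   + Max ((\<lambda>t. \<bar>rfdiff h (a + real k * h) \<beta> y t\<bar>) ` tscale_k a h k)"

definition Lfun :: "real \<Rightarrow> real \<Rightarrow> nat \<Rightarrow> real \<Rightarrow> real \<Rightarrow>
    (real \<Rightarrow> real \<Rightarrow> real \<Rightarrow> real \<Rightarrow> real) \<Rightarrow> (real \<Rightarrow> real) \<Rightarrow> real" where
  "Lfun a h k \<alpha> \<beta> L y = dint h a (a + real k * h)
     (\<lambda>t. L t (y (t + h)) (lfdiff a h \<alpha> y t) (rfdiff h (a + real k * h) \<beta> y t))"

definition loc_min :: "real \<Rightarrow> real \<Rightarrow> nat \<Rightarrow> real \<Rightarrow> real \<Rightarrow>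
    (real \<Rightarrow> real \<Rightarrow> real \<Rightarrow> real \<Rightarrow> real) \<Rightarrow> real \<Rightarrow> real \<Rightarrow> (real \<Rightarrow> real) \<Rightarrow> bool" where
  "loc_min a h k \<alpha> \<beta> L A B yh \<longleftrightarrow>
     yh a = A \<and> yh (a + real k * h) = B \<and>
     (\<exists>\<delta>>0. \<forall>y. y a = A \<longrightarrow> y (a + real k * h) = B \<longrightarrow>
        ynorm a h k \<alpha> \<beta> (\<lambda>t. y t - yh t) < \<delta> \<longrightarrow> Lfun a h k \<alpha> \<beta> L yh \<le> Lfun a h k \<alpha> \<beta> L y)"

definition pd :: "('a::euclidean_space \<Rightarrow> real) \<Rightarrow> 'a \<Rightarrow> 'a \<Rightarrow> real" where
  "pd g i p = deriv (\<lambda>x. g (p + x *\<^sub>R i)) 0"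

definition C2 :: "('a::euclidean_space \<Rightarrow> real) \<Rightarrow> bool" where
  "C2 g \<longleftrightarrow> continuous_on UNIV g \<and>
     (\<forall>i\<in>Basis. (\<forall>p. (\<lambda>x. g (p + x *\<^sub>R i)) differentiable (at 0)) \<and>
        continuous_on UNIV (pd g i) \<and>
        (\<forall>j\<in>Basis. (\<forall>p. (\<lambda>x. pd g i (p + x *\<^sub>R j)) differentiable (at 0)) \<and>
           continuous_on UNIV (pd (pd g i) j)))"

definition uncurry3 :: "(real \<Rightarrow> real \<Rightarrow> real \<Rightarrow> real) \<Rightarrow> real \<times> real \<times> real \<Rightarrow> real" where
  "uncurry3 f p = f (fst p) (fst (snd p)) (snd (snd p))"

definition Lu :: "(real \<Rightarrow> real \<Rightarrow> real \<Rightarrow> real \<Rightarrow> real) \<Rightarrow> real \<Rightarrow> real \<Rightarrow> real \<Rightarrow> real \<Rightarrow> real" where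
  "Lu L t u v w = pd (uncurry3 (L t)) (1, 0, 0) (u, v, w)"
definition Lv :: "(real \<Rightarrow> real \<Rightarrow> real \<Rightarrow> real \<Rightarrow> real) \<Rightarrow> real \<Rightarrow> real \<Rightarrow> real \<Rightarrow> real \<Rightarrow> real" where
  "Lv L t u v w = pd (uncurry3 (L t)) (0, 1, 0) (u, v, w)"
definition Lw :: "(real \<Rightarrow> real \<Rightarrow> real \<Rightarrow> real \<Rightarrow> real) \<Rightarrow> real \<Rightarrow> real \<Rightarrow> real \<Rightarrow> real \<Rightarrow> real" where
  "Lw L t u v w = pd (uncurry3 (L t)) (0, 0, 1) (u, v, w)"

end

theory Submission
  imports Defs
begin


definition Wk :: "real \<Rightarrow> real \<Rightarrow> nat \<Rightarrow> real" where
  "Wk h \<nu> m = (if m = 0 then h powr \<nu> else h * (\<nu> / Gamma (\<nu> + 1)) * hfact h ((real m + \<nu> - 1) * h) (\<nu> - 1))"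

lemma dint_grid:
  assumes "h > 0" shows "dint h c (c + real n * h) G = h * (\<Sum>j<n. G (c + real j * h))"
  using assms by (simp add: dint_def)

lemma sum_if_le:
  assumes "n < M"
  shows "(\<Sum>j<M. if j \<le> n then f j else 0) = (\<Sum>j<Suc n. f j)"
proof -
  have "(\<Sum>j<M. if j \<le> n then f j else 0) = (\<Sum>j\<in>{..<M} \<inter> {..n}. f j)"
    by (simp add: sum.inter_restrict)
  also have "{..<M} \<inter> {..n} = {..<Suc n}" using assms by auto
  finally show ?thesis .
qed

lemma lfsum_grid:
  assumes h: "h > 0" and nM: "n < M"
  shows "lfsum a h \<nu> F (a + real n * h) = (\<Sum>j<M. if j \<le> n then Wk h \<nu> (n - j) * F (a + real j * h) else 0)"
proof -
  have "lfsum a h \<nu> F (a + real n * h) = h powr \<nu> * F (a + real n * h)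
     + \<nu> / Gamma (\<nu> + 1) * (h * (\<Sum>j<n. hfact h (a + real n * h + \<nu> * h - (a + real j * h + h)) (\<nu> - 1) * F (a + real j * h)))"
    unfolding lfsum_def using dint_grid[OF h, of a n] by simp
  also have "\<dots> = (\<Sum>j<n. Wk h \<nu> (n - j) * F (a + real j * h)) + Wk h \<nu> (n - n) * F (a + real n * h)"
  proof -
    have "\<And>j. j < n \<Longrightarrow> \<nu> / Gamma (\<nu> + 1) * (h * (hfact h (a + real n * h + \<nu> * h - (a + real j * h + h)) (\<nu> - 1) * F (a + real j * h)))
      = Wk h \<nu> (n - j) * F (a + real j * h)"
    proof -
      fix j assume "j < n"
      then have "a + real n * h + \<nu> * h - (a + real j * h + h) = (real (n - j) + \<nu> - 1) * h"
        by (simp add: of_nat_diff algebra_simps)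
      then show "\<nu> / Gamma (\<nu> + 1) * (h * (hfact h (a + real n * h + \<nu> * h - (a + real j * h + h)) (\<nu> - 1) * F (a + real j * h)))
      = Wk h \<nu> (n - j) * F (a + real j * h)" using \<open>j < n\<close> by (simp add: Wk_def)
    qed
    then have "\<nu> / Gamma (\<nu> + 1) * (h * (\<Sum>j<n. hfact h (a + real n * h + \<nu> * h - (a + real j * h + h)) (\<nu> - 1) * F (a + real j * h)))
       = (\<Sum>j<n. Wk h \<nu> (n - j) * F (a + real j * h))"
      by (simp only: sum_distrib_left) (rule sum.cong, simp_all)
    then show ?thesis by (simp add: Wk_def)
  qed
  also have "\<dots> = (\<Sum>j<Suc n. Wk h \<nu> (n - j) * F (a + real j * h))" by simp
  finally show ?thesis using sum_if_le[OF nM, of "\<lambda>j. Wk h \<nu> (n - j) * F (a + real j * h)"] by simp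
qed

lemma sum_if_between:
  assumes "n \<le> N" "N < M"
  shows "(\<Sum>j<M. if n \<le> j \<and> j \<le> N then f j else 0) = f n + (\<Sum>j<N - n. f (Suc n + j))"
proof -
  have "(\<Sum>j<M. if n \<le> j \<and> j \<le> N then f j else 0) = (\<Sum>j\<in>{..<M} \<inter> {n..N}. f j)"
    by (simp add: sum.inter_restrict)
  also have "{..<M} \<inter> {n..N} = {n..N}" using assms by auto
  also have "(\<Sum>j\<in>{n..N}. f j) = f n + (\<Sum>j\<in>{Suc n..N}. f j)"
    using assms by (simp add: sum.atLeast_Suc_atMost)
  also have "(\<Sum>j\<in>{Suc n..N}. f j) = (\<Sum>j<N - n. f (Suc n + j))"
  proof -
    show ?thesis
    proof (cases "n = N")
      case True then show ?thesis by simp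
    next
      case False
      have "(\<Sum>j\<in>{Suc n..N}. f j) = (\<Sum>j\<in>{0..N - Suc n}. f (j + Suc n))"
        using assms False by (subst sum.atLeastAtMost_shift_0) (auto simp: ac_simps)
      also have "{0..N - Suc n} = {..<N - n}" using assms False by auto
      finally show ?thesis by (simp add: add.commute)
    qed
  qed
  finally show ?thesis .
qed

lemma rfsum_grid:
  assumes h: "h > 0" and nN: "n \<le> N" and NM: "N < M"
  shows "rfsum h (a + real N * h) \<nu> F (a + real n * h) = (\<Sum>j<M. if n \<le> j \<and> j \<le> N then Wk h \<nu> (j - n) * F (a + real j * h) else 0)"
proof -
  have e: "a + real N * h + h = (a + real n * h + h) + real (N - n) * h"
    using nN by (simp add: of_nat_diff algebra_simps)
  have "rfsum h (a + real N * h) \<nu> F (a + real n * h) = h powr \<nu> * F (a + real n * h)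
     + \<nu> / Gamma (\<nu> + 1) * (h * (\<Sum>j<N - n. hfact h (a + real n * h + h + real j * h + \<nu> * h - (a + real n * h + h)) (\<nu> - 1) * F (a + real n * h + h + real j * h)))"
    unfolding rfsum_def e using dint_grid[OF h, of "a + real n * h + h" "N - n"] by simp
  also have "\<dots> = Wk h \<nu> (n - n) * F (a + real n * h) + (\<Sum>j<N - n. Wk h \<nu> (Suc n + j - n) * F (a + real (Suc n + j) * h))"
  proof -
    have "\<And>j. \<nu> / Gamma (\<nu> + 1) * (h * (hfact h (a + real n * h + h + real j * h + \<nu> * h - (a + real n * h + h)) (\<nu> - 1) * F (a + real n * h + h + real j * h)))
      = Wk h \<nu> (Suc n + j - n) * F (a + real (Suc n + j) * h)"
    proof -
      fix j
      have 1: "a + real n * h + h + real j * h + \<nu> * h - (a + real n * h + h) = (real (Suc n + j - n) + \<nu> - 1) * h"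
        by (simp add: algebra_simps)
      have 2: "a + real n * h + h + real j * h = a + real (Suc n + j) * h" by (simp add: algebra_simps)
      show "\<nu> / Gamma (\<nu> + 1) * (h * (hfact h (a + real n * h + h + real j * h + \<nu> * h - (a + real n * h + h)) (\<nu> - 1) * F (a + real n * h + h + real j * h)))
      = Wk h \<nu> (Suc n + j - n) * F (a + real (Suc n + j) * h)"
        unfolding 1 unfolding 2 by (simp add: Wk_def)
    qed
    then have "\<nu> / Gamma (\<nu> + 1) * (h * (\<Sum>j<N - n. hfact h (a + real n * h + h + real j * h + \<nu> * h - (a + real n * h + h)) (\<nu> - 1) * F (a + real n * h + h + real j * h)))
      = (\<Sum>j<N - n. Wk h \<nu> (Suc n + j - n) * F (a + real (Suc n + j) * h))"
      by (simp only: sum_distrib_left)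
    then show ?thesis by (simp add: Wk_def)
  qed
  finally show ?thesis
    using sum_if_between[OF nN NM, of "\<lambda>j. Wk h \<nu> (j - n) * F (a + real j * h)"] by simp
qed



lemma lfdiff_grid:
  assumes h: "h > 0" and nM: "Suc n < M"
  shows "lfdiff a h \<alpha> F (a + real n * h) =
    ((\<Sum>j<M. if j \<le> Suc n then Wk h (1 - \<alpha>) (Suc n - j) * F (a + real j * h) else 0)
   - (\<Sum>j<M. if j \<le> n then Wk h (1 - \<alpha>) (n - j) * F (a + real j * h) else 0)) / h"
proof -
  have e: "a + real n * h + h = a + real (Suc n) * h" by (simp add: algebra_simps)
  show ?thesis unfolding lfdiff_def e
    using lfsum_grid[OF h nM, of a "1 - \<alpha>" F] lfsum_grid[OF h, of n M a "1 - \<alpha>" F] nM by simp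
qed

lemma rfdiff_grid:
  assumes h: "h > 0" and nN: "Suc n \<le> N" and NM: "N < M"
  shows "rfdiff h (a + real N * h) \<alpha> F (a + real n * h) =
    - (((\<Sum>j<M. if Suc n \<le> j \<and> j \<le> N then Wk h (1 - \<alpha>) (j - Suc n) * F (a + real j * h) else 0)
   - (\<Sum>j<M. if n \<le> j \<and> j \<le> N then Wk h (1 - \<alpha>) (j - n) * F (a + real j * h) else 0)) / h)"
proof -
  have e: "a + real n * h + h = a + real (Suc n) * h" by (simp add: algebra_simps)
  show ?thesis unfolding rfdiff_def e
    using rfsum_grid[OF h nN NM, of a "1 - \<alpha>" F] rfsum_grid[OF h _ NM, of n a "1 - \<alpha>" F] nN by simp
qed

lemma grid_eq_iff:
  assumes "h > 0" shows "(a + real m * h = a + real i * h) \<longleftrightarrow> m = i"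
  using assms by simp

lemma delta1:
  fixes i M m :: nat
  assumes "i < M"
  shows "(\<Sum>j<M. if j \<le> m then c j * (if j = i then 1 else 0) else 0) = (if i \<le> m then c i else (0::real))"
proof -
  have "(\<Sum>j<M. if j \<le> m then c j * (if j = i then 1 else 0) else 0) = (\<Sum>j<M. if j = i then (if i \<le> m then c i else 0) else 0)"
    by (rule sum.cong) auto
  also have "\<dots> = (if i \<in> {..<M} then (if i \<le> m then c i else 0) else 0)" by (rule sum.delta) simp
  finally show ?thesis using assms by simp
qed

lemma delta2:
  fixes i M m N :: nat
  assumes "i < M"
  shows "(\<Sum>j<M. if m \<le> j \<and> j \<le> N then c j * (if j = i then 1 else 0) else 0) = (if m \<le> i \<and> i \<le> N then c i else (0::real))"
proof -
  have "(\<Sum>j<M. if m \<le> j \<and> j \<le> N then c j * (if j = i then 1 else 0) else 0) = (\<Sum>j<M. if j = i then (if m \<le> i \<and> i \<le> N then c i else 0) else 0)"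
    by (rule sum.cong) auto
  also have "\<dots> = (if i \<in> {..<M} then (if m \<le> i \<and> i \<le> N then c i else 0) else 0)" by (rule sum.delta) simp
  finally show ?thesis using assms by simp
qed

lemma sum_diff_div:
  "(\<Sum>n\<in>S. (A n - B n) / h * V n) = ((\<Sum>n\<in>S. A n * V n) - (\<Sum>n\<in>S. B n * V n)) / (h::real)"
  by (simp add: sum_divide_distrib[symmetric] sum_subtractf[symmetric] left_diff_distrib)

lemma sbp:
  fixes U V Z :: "real \<Rightarrow> real" and a h \<alpha> \<beta> :: real and i k :: nat
  assumes h: "h > 0" and i1: "1 \<le> i" and ik: "i < k"
  defines "\<eta> \<equiv> (\<lambda>t. if t = a + real i * h then 1 else 0 :: real)"
  shows "(\<Sum>n<k. \<eta> (a + real n * h + h) * U (a + real n * h)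
              + lfdiff a h \<alpha> \<eta> (a + real n * h) * V (a + real n * h)
              + rfdiff h (a + real k * h) \<beta> \<eta> (a + real n * h) * Z (a + real n * h))
   = U (a + real (i - 1) * h) + rfdiff h (a + real k * h - h) \<alpha> V (a + real (i - 1) * h)
     + lfdiff a h \<beta> Z (a + real (i - 1) * h)"
proof -
  have eta: "\<eta> (a + real m * h) = (if m = i then 1 else 0)" for m
    unfolding \<eta>_def using h by simp
  define Wa where "Wa = Wk h (1 - \<alpha>)"
  define Wb where "Wb = Wk h (1 - \<beta>)"
  have P: "(\<Sum>n<k. \<eta> (a + real n * h + h) * U (a + real n * h)) = U (a + real (i - 1) * h)"
  proof -
    have "(\<Sum>n<k. \<eta> (a + real n * h + h) * U (a + real n * h)) = (\<Sum>n<k. if n = i - 1 then U (a + real n * h) else 0)"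
    proof (rule sum.cong)
      fix n assume "n \<in> {..<k}"
      have "a + real n * h + h = a + real (Suc n) * h" by (simp add: algebra_simps)
      then have "\<eta> (a + real n * h + h) = (if Suc n = i then 1 else 0)" by (simp only: eta)
      moreover have "(Suc n = i) = (n = i - 1)" using i1 by auto
      ultimately show "\<eta> (a + real n * h + h) * U (a + real n * h) = (if n = i - 1 then U (a + real n * h) else 0)"
        by simp
    qed simp
    then show ?thesis using ik by simp
  qed
  have lq: "lfdiff a h \<alpha> \<eta> (a + real n * h) = ((if i \<le> Suc n then Wa (Suc n - i) else 0) - (if i \<le> n then Wa (n - i) else 0)) / h"
    if "n < k" for n
  proof -
    have "lfdiff a h \<alpha> \<eta> (a + real n * h) =
    ((\<Sum>j<Suc k. if j \<le> Suc n then Wa (Suc n - j) * \<eta> (a + real j * h) else 0)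
   - (\<Sum>j<Suc k. if j \<le> n then Wa (n - j) * \<eta> (a + real j * h) else 0)) / h"
      unfolding Wa_def by (rule lfdiff_grid) (use h that in auto)
    also have "\<dots> = ((if i \<le> Suc n then Wa (Suc n - i) else 0) - (if i \<le> n then Wa (n - i) else 0)) / h"
      using ik by (simp only: eta delta1[of i "Suc k"] less_SucI)
    finally show ?thesis .
  qed
  have eb: "a + real k * h - h = a + real (k - 1) * h" using ik by (simp add: of_nat_diff algebra_simps)
  have Q: "(\<Sum>n<k. lfdiff a h \<alpha> \<eta> (a + real n * h) * V (a + real n * h)) = rfdiff h (a + real k * h - h) \<alpha> V (a + real (i - 1) * h)"
  proof -
    have "(\<Sum>n<k. lfdiff a h \<alpha> \<eta> (a + real n * h) * V (a + real n * h))
      = (\<Sum>n<k. ((if i \<le> Suc n then Wa (Suc n - i) else 0) - (if i \<le> n then Wa (n - i) else 0)) / h * V (a + real n * h))"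
      by (rule sum.cong) (simp_all add: lq)
    also have "\<dots> = ((\<Sum>n<k. (if i \<le> Suc n then Wa (Suc n - i) else 0) * V (a + real n * h))
       - (\<Sum>n<k. (if i \<le> n then Wa (n - i) else 0) * V (a + real n * h))) / h"
      by (rule sum_diff_div)
    also have "\<dots> = rfdiff h (a + real k * h - h) \<alpha> V (a + real (i - 1) * h)"
    proof -
      have r: "rfdiff h (a + real k * h - h) \<alpha> V (a + real (i - 1) * h) =
        - (((\<Sum>j<k. if Suc (i - 1) \<le> j \<and> j \<le> k - 1 then Wa (j - Suc (i - 1)) * V (a + real j * h) else 0)
        - (\<Sum>j<k. if i - 1 \<le> j \<and> j \<le> k - 1 then Wa (j - (i - 1)) * V (a + real j * h) else 0)) / h)"
        unfolding eb Wa_def using rfdiff_grid[OF h, of "i - 1" "k - 1" k a \<alpha> V] i1 ik by simp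
      have s1: "(\<Sum>n<k. (if i \<le> Suc n then Wa (Suc n - i) else 0) * V (a + real n * h))
         = (\<Sum>j<k. if i - 1 \<le> j \<and> j \<le> k - 1 then Wa (j - (i - 1)) * V (a + real j * h) else 0)"
        by (rule sum.cong) (use i1 in \<open>auto simp: Suc_diff_le\<close>)
      have s2: "(\<Sum>n<k. (if i \<le> n then Wa (n - i) else 0) * V (a + real n * h))
         = (\<Sum>j<k. if Suc (i - 1) \<le> j \<and> j \<le> k - 1 then Wa (j - Suc (i - 1)) * V (a + real j * h) else 0)"
        by (rule sum.cong) (use i1 in auto)
      have neg: "\<And>A B::real. (A - B) / h = - ((B - A) / h)" by (simp add: diff_divide_distrib)
      show ?thesis unfolding r s1 s2 by (rule neg)
    qed
    finally show ?thesis .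
  qed
  have lr: "rfdiff h (a + real k * h) \<beta> \<eta> (a + real n * h) = - (((if Suc n \<le> i \<and> i \<le> k then Wb (i - Suc n) else 0) - (if n \<le> i \<and> i \<le> k then Wb (i - n) else 0)) / h)"
    if "n < k" for n
  proof -
    have "rfdiff h (a + real k * h) \<beta> \<eta> (a + real n * h) =
    - (((\<Sum>j<Suc k. if Suc n \<le> j \<and> j \<le> k then Wb (j - Suc n) * \<eta> (a + real j * h) else 0)
   - (\<Sum>j<Suc k. if n \<le> j \<and> j \<le> k then Wb (j - n) * \<eta> (a + real j * h) else 0)) / h)"
      unfolding Wb_def by (rule rfdiff_grid) (use h that in auto)
    also have "\<dots> = - (((if Suc n \<le> i \<and> i \<le> k then Wb (i - Suc n) else 0) - (if n \<le> i \<and> i \<le> k then Wb (i - n) else 0)) / h)"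
      using ik by (simp only: eta delta2[of i "Suc k"] less_SucI)
    finally show ?thesis .
  qed
  have R: "(\<Sum>n<k. rfdiff h (a + real k * h) \<beta> \<eta> (a + real n * h) * Z (a + real n * h)) = lfdiff a h \<beta> Z (a + real (i - 1) * h)"
  proof -
    have "(\<Sum>n<k. rfdiff h (a + real k * h) \<beta> \<eta> (a + real n * h) * Z (a + real n * h))
      = (\<Sum>n<k. ((if n \<le> i \<and> i \<le> k then Wb (i - n) else 0) - (if Suc n \<le> i \<and> i \<le> k then Wb (i - Suc n) else 0)) / h * Z (a + real n * h))"
      by (rule sum.cong) (simp_all add: lr diff_divide_distrib)
    also have "\<dots> = ((\<Sum>n<k. (if n \<le> i \<and> i \<le> k then Wb (i - n) else 0) * Z (a + real n * h))
       - (\<Sum>n<k. (if Suc n \<le> i \<and> i \<le> k then Wb (i - Suc n) else 0) * Z (a + real n * h))) / h"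
      by (rule sum_diff_div)
    also have "\<dots> = lfdiff a h \<beta> Z (a + real (i - 1) * h)"
    proof -
      have r: "lfdiff a h \<beta> Z (a + real (i - 1) * h) =
        ((\<Sum>j<k. if j \<le> Suc (i - 1) then Wb (Suc (i - 1) - j) * Z (a + real j * h) else 0)
       - (\<Sum>j<k. if j \<le> i - 1 then Wb (i - 1 - j) * Z (a + real j * h) else 0)) / h"
        unfolding Wb_def using lfdiff_grid[OF h, of "i - 1" k a \<beta> Z] i1 ik by simp
      have s1: "(\<Sum>n<k. (if n \<le> i \<and> i \<le> k then Wb (i - n) else 0) * Z (a + real n * h))
         = (\<Sum>j<k. if j \<le> Suc (i - 1) then Wb (Suc (i - 1) - j) * Z (a + real j * h) else 0)"
        by (rule sum.cong) (use i1 ik in auto)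
      have s2: "(\<Sum>n<k. (if Suc n \<le> i \<and> i \<le> k then Wb (i - Suc n) else 0) * Z (a + real n * h))
         = (\<Sum>j<k. if j \<le> i - 1 then Wb (i - 1 - j) * Z (a + real j * h) else 0)"
        by (rule sum.cong) (use i1 ik in auto)
      show ?thesis unfolding r s1 s2 by simp
    qed
    finally show ?thesis .
  qed
  show ?thesis using P Q R by (simp add: sum.distrib)
qed



lemma incr_bound:
  fixes g g' :: "real \<Rightarrow> real"
  assumes D: "\<And>s. (g has_real_derivative g' s) (at s)"
    and B: "\<And>s. \<bar>s\<bar> \<le> \<bar>y\<bar> \<Longrightarrow> \<bar>g' s\<bar> \<le> e"
  shows "\<bar>g y - g 0\<bar> \<le> \<bar>y\<bar> * e"
proof (cases "y = 0")
  case True then show ?thesis by simp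
next
  case False
  show ?thesis
  proof (cases "y > 0")
    case True
    obtain z where z: "0 < z" "z < y" "g y - g 0 = (y - 0) * g' z"
      using MVT2[OF True D] by blast
    have "\<bar>g' z\<bar> \<le> e" using B z by auto
    then show ?thesis using z True by (simp add: abs_mult mult_left_mono)
  next
    case False
    then have y: "y < 0" using \<open>y \<noteq> 0\<close> by simp
    obtain z where z: "y < z" "z < 0" "g 0 - g y = (0 - y) * g' z"
      using MVT2[OF y D] by blast
    have "\<bar>g' z\<bar> \<le> e" using B z by auto
    then have "\<bar>g 0 - g y\<bar> \<le> \<bar>y\<bar> * e" using z y by (simp add: abs_mult mult_left_mono)
    then show ?thesis by (simp add: abs_minus_commute)
  qed
qed

lemma diag_deriv:
  fixes f D :: "real \<Rightarrow> real \<Rightarrow> real"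
  assumes A: "((\<lambda>x. f x 0) has_real_derivative A) (at 0)"
    and D: "\<And>x s. ((\<lambda>s. f x s) has_real_derivative D x s) (at s)"
    and C: "\<And>e. e > 0 \<Longrightarrow> \<exists>d>0. \<forall>x s. \<bar>x\<bar> < d \<longrightarrow> \<bar>s\<bar> < d \<longrightarrow> \<bar>D x s - D 0 0\<bar> < e"
  shows "((\<lambda>x. f x (x * c)) has_real_derivative (A + c * D 0 0)) (at 0)"
proof -
  define R where "R x = f x (x * c) - f x 0 - x * c * D 0 0" for x
  have R0: "R 0 = 0" by (simp add: R_def)
  have R': "(R has_real_derivative 0) (at 0)"
    unfolding DERIV_def
  proof (rule LIM_I)
    fix r :: real assume r: "r > 0"
    define e where "e = r / (\<bar>c\<bar> + 1)"
    have e: "e > 0" using r by (simp add: e_def)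
    obtain d where d: "d > 0" "\<And>x s. \<bar>x\<bar> < d \<Longrightarrow> \<bar>s\<bar> < d \<Longrightarrow> \<bar>D x s - D 0 0\<bar> < e"
      using C[OF e] by blast
    define s where "s = min d (d / (\<bar>c\<bar> + 1))"
    have s: "s > 0" using d by (simp add: s_def)
    show "\<exists>s>0. \<forall>x. x \<noteq> 0 \<and> norm (x - 0) < s \<longrightarrow> norm ((R (0 + x) - R 0) / x - 0) < r"
    proof (intro exI conjI allI impI)
      show "s > 0" by (fact s)
    next
      fix x :: real assume x: "x \<noteq> 0 \<and> norm (x - 0) < s"
      then have xd: "\<bar>x\<bar> < d" by (simp add: s_def)
      have "\<bar>x\<bar> < d / (\<bar>c\<bar> + 1)" using x by (simp add: s_def)
      then have "\<bar>x\<bar> * (\<bar>c\<bar> + 1) < d" by (simp add: field_simps)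
      then have xcd: "\<bar>x * c\<bar> < d" by (simp add: abs_mult algebra_simps)
      have "\<bar>(\<lambda>s. f x s - s * D 0 0) (x * c) - (\<lambda>s. f x s - s * D 0 0) 0\<bar> \<le> \<bar>x * c\<bar> * e"
      proof (rule incr_bound)
        fix s show "((\<lambda>s. f x s - s * D 0 0) has_real_derivative (D x s - D 0 0)) (at s)"
          using D[of x s] by (auto intro!: derivative_eq_intros)
      next
        fix s assume "\<bar>s\<bar> \<le> \<bar>x * c\<bar>"
        then have "\<bar>s\<bar> < d" using xcd by simp
        then show "\<bar>D x s - D 0 0\<bar> \<le> e" using d(2)[OF xd] by (simp add: less_imp_le)
      qed
      then have "\<bar>R x\<bar> \<le> \<bar>x\<bar> * (\<bar>c\<bar> * e)" by (simp add: R_def abs_mult algebra_simps)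
      then have "\<bar>R x / x\<bar> \<le> \<bar>c\<bar> * e" using x by (simp add: abs_divide divide_le_eq mult.commute)
      also have "\<bar>c\<bar> * e < r" using r by (simp add: e_def field_simps)
      finally show "norm ((R (0 + x) - R 0) / x - 0) < r" by (simp add: R0)
    qed
  qed
  have eq: "(\<lambda>x. f x (x * c)) = (\<lambda>x. f x 0 + x * (c * D 0 0) + R x)"
    by (auto simp: R_def algebra_simps)
  have "((\<lambda>x. f x 0 + x * (c * D 0 0) + R x) has_real_derivative (A + 1 * (c * D 0 0) + 0)) (at 0)"
    by (intro DERIV_add A R' DERIV_cmult_right DERIV_ident)
  then show ?thesis unfolding eq by simp
qed



lemma C2_HD:
  fixes g :: "real \<times> real \<times> real \<Rightarrow> real"
  assumes "C2 g" "i \<in> Basis"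
  shows "((\<lambda>x. g (q + x *\<^sub>R i)) has_real_derivative pd g i (q + s *\<^sub>R i)) (at s)"
proof -
  define q' where "q' = q + s *\<^sub>R i"
  have "(\<lambda>x. g (q' + x *\<^sub>R i)) differentiable (at 0)" using assms unfolding C2_def by blast
  then have d0: "((\<lambda>x. g (q' + x *\<^sub>R i)) has_real_derivative pd g i q') (at 0)"
    unfolding pd_def by (simp add: DERIV_deriv_iff_real_differentiable)
  have "((\<lambda>x. (\<lambda>y. g (q' + y *\<^sub>R i)) (x - s)) has_real_derivative pd g i q' * 1) (at s)"
    by (rule DERIV_chain'[of "\<lambda>x. x - s"]) (auto intro!: derivative_eq_intros simp: d0)
  moreover have "\<And>x. q' + (x - s) *\<^sub>R i = q + x *\<^sub>R i" by (simp add: q'_def scaleR_diff_left)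
  ultimately show ?thesis by (simp add: q'_def add.assoc)
qed

lemma cont_lem:
  fixes P :: "'a::real_normed_vector \<Rightarrow> real"
  assumes P: "continuous_on UNIV P" and e: "e > 0"
  shows "\<exists>d>0. \<forall>x s. \<bar>x\<bar> < d \<longrightarrow> \<bar>s\<bar> < d \<longrightarrow> \<bar>P (q + x *\<^sub>R u + s *\<^sub>R v) - P (q + 0 *\<^sub>R u + 0 *\<^sub>R v)\<bar> < e"
proof -
  have "isCont P q" using P by (simp add: continuous_on_eq_continuous_at)
  then obtain d where d: "d > 0" "\<And>y. dist y q < d \<Longrightarrow> dist (P y) (P q) < e"
    using e unfolding continuous_at_eps_delta by blast
  define d' where "d' = d / (norm u + norm v + 1)"
  have "norm u + norm v + 1 > 0" using norm_ge_zero[of u] norm_ge_zero[of v] by linarith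
  then have d'p: "d' > 0" using d by (simp add: d'_def)
  show ?thesis
  proof (intro exI conjI allI impI)
    show "d' > 0" by (fact d'p)
  next
    fix x s :: real assume x: "\<bar>x\<bar> < d'" and s: "\<bar>s\<bar> < d'"
    have "norm (x *\<^sub>R u + s *\<^sub>R v) \<le> \<bar>x\<bar> * norm u + \<bar>s\<bar> * norm v"
      by (metis norm_scaleR norm_triangle_ineq)
    also have "\<dots> \<le> d' * norm u + d' * norm v"
      using x s by (intro add_mono mult_right_mono) auto
    also have "\<dots> = d' * (norm u + norm v)" by (simp add: algebra_simps)
    also have "\<dots> < d"
    proof -
      have X: "norm u + norm v \<ge> 0" by simp
      have pos: "norm u + norm v + 1 > 0" using X by linarith
      have lt: "d * (norm u + norm v) < d * (norm u + norm v + 1)" using d by simp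
      have "d' * (norm u + norm v) = d * (norm u + norm v) / (norm u + norm v + 1)" by (simp add: d'_def)
      also have "\<dots> < d" using lt pos by (simp add: divide_less_eq)
      finally show ?thesis .
    qed
    finally have "dist (q + x *\<^sub>R u + s *\<^sub>R v) q < d" by (simp add: dist_norm add.assoc)
    then show "\<bar>P (q + x *\<^sub>R u + s *\<^sub>R v) - P (q + 0 *\<^sub>R u + 0 *\<^sub>R v)\<bar> < e"
      using d(2) by (simp add: dist_real_def)
  qed
qed

lemma dir_deriv:
  fixes g :: "real \<times> real \<times> real \<Rightarrow> real"
  assumes g: "C2 g"
  shows "((\<lambda>\<epsilon>. g (p + \<epsilon> *\<^sub>R (d1, d2, d3))) has_real_derivative
           d1 * pd g (1, 0, 0) p + d2 * pd g (0, 1, 0) p + d3 * pd g (0, 0, 1) p) (at 0)"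
proof -
  define e1 :: "real \<times> real \<times> real" where "e1 = (1, 0, 0)"
  define e2 :: "real \<times> real \<times> real" where "e2 = (0, 1, 0)"
  define e3 :: "real \<times> real \<times> real" where "e3 = (0, 0, 1)"
  have B: "e1 \<in> Basis" "e2 \<in> Basis" "e3 \<in> Basis" by (auto simp: e1_def e2_def e3_def Basis_prod_def zero_prod_def)
  have cont: "continuous_on UNIV (pd g i)" if "i \<in> Basis" for i using g that unfolding C2_def by blast
  have S1: "((\<lambda>x. g (p + (x * d1) *\<^sub>R e1)) has_real_derivative pd g e1 p * d1) (at 0)"
  proof -
    have "((\<lambda>x. (\<lambda>y. g (p + y *\<^sub>R e1)) (x * d1)) has_real_derivative pd g e1 (p + (0 * d1) *\<^sub>R e1) * d1) (at 0)"
      by (rule DERIV_chain'[of "\<lambda>x. x * d1"]) (auto intro!: derivative_eq_intros C2_HD[OF g B(1), of p 0, simplified])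
    moreover have "p + (0 * d1) *\<^sub>R e1 = p" by simp
    ultimately show ?thesis by simp
  qed
  define u where "u = d1 *\<^sub>R e1"
  have S2: "((\<lambda>x. g (p + x *\<^sub>R u + (x * d2) *\<^sub>R e2)) has_real_derivative pd g e1 p * d1 + d2 * pd g e2 (p + 0 *\<^sub>R u + 0 *\<^sub>R e2)) (at 0)"
  proof (rule diag_deriv[where f = "\<lambda>x s. g (p + x *\<^sub>R u + s *\<^sub>R e2)" and D = "\<lambda>x s. pd g e2 (p + x *\<^sub>R u + s *\<^sub>R e2)"])
    show "((\<lambda>x. g (p + x *\<^sub>R u + 0 *\<^sub>R e2)) has_real_derivative pd g e1 p * d1) (at 0)"
      using S1 by (simp add: u_def)
  next
    fix x s show "((\<lambda>s. g (p + x *\<^sub>R u + s *\<^sub>R e2)) has_real_derivative pd g e2 (p + x *\<^sub>R u + s *\<^sub>R e2)) (at s)"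
      by (rule C2_HD[OF g B(2)])
  next
    fix e :: real assume "e > 0"
    from cont_lem[OF cont[OF B(2)] this, of p u e2]
    show "\<exists>d>0. \<forall>x s. \<bar>x\<bar> < d \<longrightarrow> \<bar>s\<bar> < d \<longrightarrow> \<bar>pd g e2 (p + x *\<^sub>R u + s *\<^sub>R e2) - pd g e2 (p + 0 *\<^sub>R u + 0 *\<^sub>R e2)\<bar> < e" .
  qed
  define u' where "u' = d1 *\<^sub>R e1 + d2 *\<^sub>R e2"
  have S3: "((\<lambda>x. g (p + x *\<^sub>R u' + (x * d3) *\<^sub>R e3)) has_real_derivative (pd g e1 p * d1 + d2 * pd g e2 p) + d3 * pd g e3 (p + 0 *\<^sub>R u' + 0 *\<^sub>R e3)) (at 0)"
  proof (rule diag_deriv[where f = "\<lambda>x s. g (p + x *\<^sub>R u' + s *\<^sub>R e3)" and D = "\<lambda>x s. pd g e3 (p + x *\<^sub>R u' + s *\<^sub>R e3)"])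
    have "(\<lambda>x. g (p + x *\<^sub>R u' + 0 *\<^sub>R e3)) = (\<lambda>x. g (p + x *\<^sub>R u + (x * d2) *\<^sub>R e2))"
      by (simp add: u_def u'_def scaleR_add_right add.assoc)
    then show "((\<lambda>x. g (p + x *\<^sub>R u' + 0 *\<^sub>R e3)) has_real_derivative pd g e1 p * d1 + d2 * pd g e2 p) (at 0)"
      using S2 by simp
  next
    fix x s show "((\<lambda>s. g (p + x *\<^sub>R u' + s *\<^sub>R e3)) has_real_derivative pd g e3 (p + x *\<^sub>R u' + s *\<^sub>R e3)) (at s)"
      by (rule C2_HD[OF g B(3)])
  next
    fix e :: real assume "e > 0"
    from cont_lem[OF cont[OF B(3)] this, of p u' e3]
    show "\<exists>d>0. \<forall>x s. \<bar>x\<bar> < d \<longrightarrow> \<bar>s\<bar> < d \<longrightarrow> \<bar>pd g e3 (p + x *\<^sub>R u' + s *\<^sub>R e3) - pd g e3 (p + 0 *\<^sub>R u' + 0 *\<^sub>R e3)\<bar> < e" .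
  qed
  have "(\<lambda>x. g (p + x *\<^sub>R u' + (x * d3) *\<^sub>R e3)) = (\<lambda>\<epsilon>. g (p + \<epsilon> *\<^sub>R (d1, d2, d3)))"
    by (simp add: u'_def e1_def e2_def e3_def add.assoc)
  moreover have "p + 0 *\<^sub>R u' + 0 *\<^sub>R e3 = p" by simp
  ultimately show ?thesis using S3 by (simp add: e1_def e2_def e3_def algebra_simps)
qed



lemma dint_add: "dint h c d (\<lambda>s. F s + e * G s) = dint h c d F + e * dint h c d G"
  by (simp add: dint_def sum.distrib sum_distrib_left algebra_simps)

lemma lfsum_add: "lfsum a h \<nu> (\<lambda>s. F s + e * G s) t = lfsum a h \<nu> F t + e * lfsum a h \<nu> G t"
proof -
  have "dint h a t (\<lambda>s. hfact h (t + \<nu> * h - (s + h)) (\<nu> - 1) * (F s + e * G s))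
    = dint h a t (\<lambda>s. hfact h (t + \<nu> * h - (s + h)) (\<nu> - 1) * F s + e * (hfact h (t + \<nu> * h - (s + h)) (\<nu> - 1) * G s))"
    by (simp add: algebra_simps)
  then show ?thesis unfolding lfsum_def by (simp add: dint_add algebra_simps)
qed

lemma rfsum_add: "rfsum h c \<nu> (\<lambda>s. F s + e * G s) t = rfsum h c \<nu> F t + e * rfsum h c \<nu> G t"
proof -
  have "dint h (t + h) (c + h) (\<lambda>s. hfact h (s + \<nu> * h - (t + h)) (\<nu> - 1) * (F s + e * G s))
    = dint h (t + h) (c + h) (\<lambda>s. hfact h (s + \<nu> * h - (t + h)) (\<nu> - 1) * F s + e * (hfact h (s + \<nu> * h - (t + h)) (\<nu> - 1) * G s))"
    by (simp add: algebra_simps)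
  then show ?thesis unfolding rfsum_def by (simp add: dint_add algebra_simps)
qed

lemma lfdiff_add: "lfdiff a h \<alpha> (\<lambda>s. F s + e * G s) t = lfdiff a h \<alpha> F t + e * lfdiff a h \<alpha> G t"
  unfolding lfdiff_def lfsum_add by (simp add: algebra_simps diff_divide_distrib add_divide_distrib)

lemma rfdiff_add: "rfdiff h c \<alpha> (\<lambda>s. F s + e * G s) t = rfdiff h c \<alpha> F t + e * rfdiff h c \<alpha> G t"
  unfolding rfdiff_def rfsum_add by (simp add: algebra_simps diff_divide_distrib add_divide_distrib)

lemma lfdiff_scale: "lfdiff a h \<alpha> (\<lambda>s. e * G s) t = e * lfdiff a h \<alpha> G t"
proof -
  have "lfdiff a h \<alpha> (\<lambda>s. 0) t = 0" by (simp add: lfdiff_def lfsum_def dint_def)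
  then show ?thesis using lfdiff_add[of a h \<alpha> "\<lambda>s. 0" e G t] by simp
qed

lemma rfdiff_scale: "rfdiff h c \<alpha> (\<lambda>s. e * G s) t = e * rfdiff h c \<alpha> G t"
proof -
  have "rfdiff h c \<alpha> (\<lambda>s. 0) t = 0" by (simp add: rfdiff_def rfsum_def dint_def)
  then show ?thesis using rfdiff_add[of h c \<alpha> "\<lambda>s. 0" e G t] by simp
qed

lemma Max_scale:
  fixes f :: "'a \<Rightarrow> real"
  assumes "finite S" "S \<noteq> {}" "c \<ge> 0"
  shows "Max ((\<lambda>t. c * f t) ` S) = c * Max (f ` S)"
proof -
  have "mono ((*) c)" using assms(3) by (auto intro: monoI mult_left_mono)
  from mono_Max_commute[OF this, of "f ` S"] assms show ?thesis by (simp add: image_image)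
qed

lemma Max_abs_nonneg:
  fixes f :: "'a \<Rightarrow> real"
  assumes "finite S" "x \<in> S"
  shows "0 \<le> Max ((\<lambda>t. \<bar>f t\<bar>) ` S)"
proof -
  have "\<bar>f x\<bar> \<le> Max ((\<lambda>t. \<bar>f t\<bar>) ` S)" using assms by (intro Max_ge) auto
  then show ?thesis by linarith
qed

lemma tscale_k_eq: "tscale_k a h k = (\<lambda>j. a + real j * h) ` {..<k}"
  by (auto simp: tscale_k_def)

lemma ynorm_scale:
  assumes k: "k \<ge> 1"
  shows "ynorm a h k \<alpha> \<beta> (\<lambda>t. e * G t) = \<bar>e\<bar> * ynorm a h k \<alpha> \<beta> G"
proof -
  have fin: "finite (tscale_k a h k)" and ne: "tscale_k a h k \<noteq> {}"
    using k by (auto simp: tscale_k_eq lessThan_empty_iff)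
  have ab: "\<And>x. \<bar>e * x\<bar> = \<bar>e\<bar> * \<bar>x\<bar>" by (simp add: abs_mult)
  show ?thesis unfolding ynorm_def lfdiff_scale rfdiff_scale ab
    by (simp only: Max_scale[OF fin ne abs_ge_zero] distrib_left)
qed

lemma ynorm_nonneg:
  assumes k: "k \<ge> 1"
  shows "ynorm a h k \<alpha> \<beta> G \<ge> 0"
proof -
  have fin: "finite (tscale_k a h k)" and mem: "a \<in> tscale_k a h k"
    using k by (auto simp: tscale_k_eq intro!: image_eqI[where x=0])
  show ?thesis unfolding ynorm_def
    using Max_abs_nonneg[OF fin mem] by (simp add: add_nonneg_nonneg)
qed



theorem mainTheorem11:
  fixes a h \<alpha> \<beta> A B :: real and k :: nat
    and L :: "real \<Rightarrow> real \<Rightarrow> real \<Rightarrow> real \<Rightarrow> real"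
    and yh :: "real \<Rightarrow> real"
  assumes "h > 0" and "k \<ge> 2"
    and "0 < \<alpha>" "\<alpha> \<le> 1" "0 < \<beta>" "\<beta> \<le> 1"
    and "\<forall>t \<in> tscale_k a h k. C2 (uncurry3 (L t))"
    and "loc_min a h k \<alpha> \<beta> L A B yh"
  shows "\<forall>t \<in> tscale_k2 a h k.
     Lu L t (yh (t + h)) (lfdiff a h \<alpha> yh t) (rfdiff h (a + real k * h) \<beta> yh t)
   + rfdiff h (a + real k * h - h) \<alpha>
       (\<lambda>s. Lv L s (yh (s + h)) (lfdiff a h \<alpha> yh s) (rfdiff h (a + real k * h) \<beta> yh s)) t
   + lfdiff a h \<beta>
       (\<lambda>s. Lw L s (yh (s + h)) (lfdiff a h \<alpha> yh s) (rfdiff h (a + real k * h) \<beta> yh s)) t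
   = 0"
proof
  fix t assume "t \<in> tscale_k2 a h k"
  then obtain j where j: "t = a + real j * h" "j + 2 \<le> k" by (auto simp: tscale_k2_def)
  have h: "h > 0" and k1: "k \<ge> 1" using assms by auto
  define i where "i = Suc j"
  have i1: "1 \<le> i" and ik: "i < k" and ij: "i - 1 = j" using j by (auto simp: i_def)
  define b where "b = a + real k * h"
  define \<eta> where "\<eta> = (\<lambda>t. if t = a + real i * h then 1 else 0 :: real)"
  define U where "U = (\<lambda>s. Lu L s (yh (s + h)) (lfdiff a h \<alpha> yh s) (rfdiff h b \<beta> yh s))"
  define V where "V = (\<lambda>s. Lv L s (yh (s + h)) (lfdiff a h \<alpha> yh s) (rfdiff h b \<beta> yh s))"
  define Z where "Z = (\<lambda>s. Lw L s (yh (s + h)) (lfdiff a h \<alpha> yh s) (rfdiff h b \<beta> yh s))"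
  define tn where "tn = (\<lambda>n::nat. a + real n * h)"
  define P where "P = (\<lambda>n. (yh (tn n + h), lfdiff a h \<alpha> yh (tn n), rfdiff h b \<beta> yh (tn n)))"
  define Dn where "Dn = (\<lambda>n. (\<eta> (tn n + h), lfdiff a h \<alpha> \<eta> (tn n), rfdiff h b \<beta> \<eta> (tn n)))"
  define \<phi> where "\<phi> = (\<lambda>\<epsilon>. Lfun a h k \<alpha> \<beta> L (\<lambda>t. yh t + \<epsilon> * \<eta> t))"
  have \<phi>eq: "\<phi> = (\<lambda>\<epsilon>. h * (\<Sum>n<k. uncurry3 (L (tn n)) (P n + \<epsilon> *\<^sub>R Dn n)))"
  proof
    fix \<epsilon>
    show "\<phi> \<epsilon> = h * (\<Sum>n<k. uncurry3 (L (tn n)) (P n + \<epsilon> *\<^sub>R Dn n))"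
      unfolding \<phi>_def Lfun_def dint_grid[OF h] lfdiff_add rfdiff_add
      by (simp add: uncurry3_def P_def Dn_def tn_def b_def)
  qed
  have C2n: "C2 (uncurry3 (L (tn n)))" if "n < k" for n
    using assms(7) that by (auto simp: tscale_k_def tn_def)
  have der: "(\<phi> has_real_derivative h * (\<Sum>n<k. \<eta> (tn n + h) * U (tn n) + lfdiff a h \<alpha> \<eta> (tn n) * V (tn n)
      + rfdiff h b \<beta> \<eta> (tn n) * Z (tn n))) (at 0)"
    unfolding \<phi>eq
  proof (intro DERIV_cmult DERIV_sum)
    fix n assume "n \<in> {..<k}"
    then have C: "C2 (uncurry3 (L (tn n)))" using C2n by simp
    show "((\<lambda>x. uncurry3 (L (tn n)) (P n + x *\<^sub>R Dn n)) has_real_derivative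
        \<eta> (tn n + h) * U (tn n) + lfdiff a h \<alpha> \<eta> (tn n) * V (tn n) + rfdiff h b \<beta> \<eta> (tn n) * Z (tn n)) (at 0)"
      using dir_deriv[OF C, of "P n" "\<eta> (tn n + h)" "lfdiff a h \<alpha> \<eta> (tn n)" "rfdiff h b \<beta> \<eta> (tn n)"]
      by (simp add: Dn_def P_def U_def V_def Z_def Lu_def Lv_def Lw_def)
  qed
  obtain \<delta> where \<delta>: "\<delta> > 0" and
    lm: "\<And>y. y a = A \<Longrightarrow> y (a + real k * h) = B \<Longrightarrow>
        ynorm a h k \<alpha> \<beta> (\<lambda>t. y t - yh t) < \<delta> \<Longrightarrow> Lfun a h k \<alpha> \<beta> L yh \<le> Lfun a h k \<alpha> \<beta> L y"
    and yA: "yh a = A" and yB: "yh (a + real k * h) = B"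
    using assms(8) unfolding loc_min_def by blast
  define N where "N = ynorm a h k \<alpha> \<beta> \<eta>"
  have N0: "N \<ge> 0" unfolding N_def by (rule ynorm_nonneg[OF k1])
  have \<eta>a: "\<eta> a = 0" unfolding \<eta>_def using h i1 by simp
  have \<eta>b: "\<eta> (a + real k * h) = 0" unfolding \<eta>_def using h ik by simp
  have "\<forall>y. \<bar>0 - y\<bar> < \<delta> / (N + 1) \<longrightarrow> \<phi> 0 \<le> \<phi> y"
  proof (intro allI impI)
    fix \<epsilon> :: real assume e: "\<bar>0 - \<epsilon>\<bar> < \<delta> / (N + 1)"
    have "ynorm a h k \<alpha> \<beta> (\<lambda>t. (yh t + \<epsilon> * \<eta> t) - yh t) = \<bar>\<epsilon>\<bar> * N"
      using ynorm_scale[OF k1, of a h \<alpha> \<beta> \<epsilon> \<eta>] by (simp add: N_def)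
    also have "\<bar>\<epsilon>\<bar> * N \<le> \<bar>\<epsilon>\<bar> * (N + 1)" by (simp add: mult_left_mono)
    also have "\<bar>\<epsilon>\<bar> * (N + 1) < \<delta>" using e N0 by (simp add: pos_less_divide_eq)
    finally have "Lfun a h k \<alpha> \<beta> L yh \<le> Lfun a h k \<alpha> \<beta> L (\<lambda>t. yh t + \<epsilon> * \<eta> t)"
      by (intro lm) (simp_all add: yA yB \<eta>a \<eta>b)
    then show "\<phi> 0 \<le> \<phi> \<epsilon>" by (simp add: \<phi>_def)
  qed
  moreover have "\<delta> / (N + 1) > 0" using \<delta> N0 by simp
  ultimately have "h * (\<Sum>n<k. \<eta> (tn n + h) * U (tn n) + lfdiff a h \<alpha> \<eta> (tn n) * V (tn n)
      + rfdiff h b \<beta> \<eta> (tn n) * Z (tn n)) = 0"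
    using DERIV_local_min[OF der] by blast
  then have "(\<Sum>n<k. \<eta> (tn n + h) * U (tn n) + lfdiff a h \<alpha> \<eta> (tn n) * V (tn n)
      + rfdiff h b \<beta> \<eta> (tn n) * Z (tn n)) = 0" using h by simp
  then have "U (a + real (i - 1) * h) + rfdiff h (a + real k * h - h) \<alpha> V (a + real (i - 1) * h)
     + lfdiff a h \<beta> Z (a + real (i - 1) * h) = 0"
    using sbp[OF h i1 ik, where U=U and V=V and Z=Z and \<alpha>=\<alpha> and \<beta>=\<beta> and a=a] by (simp add: tn_def b_def \<eta>_def)
  then show "Lu L t (yh (t + h)) (lfdiff a h \<alpha> yh t) (rfdiff h (a + real k * h) \<beta> yh t)
   + rfdiff h (a + real k * h - h) \<alpha>
       (\<lambda>s. Lv L s (yh (s + h)) (lfdiff a h \<alpha> yh s) (rfdiff h (a + real k * h) \<beta> yh s)) t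
   + lfdiff a h \<beta>
       (\<lambda>s. Lw L s (yh (s + h)) (lfdiff a h \<alpha> yh s) (rfdiff h (a + real k * h) \<beta> yh s)) t
   = 0" by (simp add: U_def V_def Z_def b_def i_def j(1))
qed

end
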